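(* Let $2\le k\le n$, $\ell\in\{0,\dots,n-k+1\}$ and $\lambda\in\{\ell+2,\dots,n+\ell-1\}\setminus\{n\}$. The matrix $M_\ell^\lambda$ induces the matching field $\mathcal{B}_\ell^\lambda$. In particular $\mathcal{B}_\ell^\lambda$ is a coherent matching field.
   Context: A matching field for ${\rm Gr}(k,n)$ is a choice of permutation $\Lambda(I)\in S_k$ for each $k$-subset $I=\{i_1<\dots<i_k\}$ of $[n]$. A real $k\times n$ matrix $M=(m_{ij})$ induces $\Lambda$ if for every $I$, among the terms $\mathrm{sgn}(\tau)x_{\tau(1)i_1}\cdots x_{\tau(k)i_k}$ ($\tau\in S_k$) of the minor $\det X_I$ of a $k\times n$ matrix of variables $X=(x_{ij})$, the unique term of minimal weight (weight $\sum_r m_{\tau(r),i_r}$) is the one with $\tau=\Lambda(I)$; $\Lambda$ is coherent if some matrix induces it. The intermediate matching field $\mathcal{B}_\ell^\lambda$: write $I=\{p,q,r_1,\dots,r_{k-2}\}$ with $p<q<r_1<\dots<r_{k-2}$. If $\lambda<n$: $\mathcal{B}_\ell^\lambda(I)=\mathrm{id}$ if $q\le\ell$, or $p=\ell+1<\lambda<q$, or $\ell+1<p$; otherwise $(12)$. If $\lambda>n$, set $\lambda'=\lambda-n$: $\mathcal{B}_\ell^\lambda(I)=\mathrm{id}$ if $q\le\ell$, or $p\le\lambda'<q=\ell+1$, or $\ell+1<p$; otherwise $(12)$. The matrix $M_\ell^\lambda=(m_{ij})$: let $N=n+1$. Row 1 is zero. For $3\le i\le k$, $m_{ij}=N^{i-2}(n+1-j)$.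 Row 2: if $\lambda<n$, $m_{2,j}=\ell+1-j$ for $1\le j\le\ell$, $m_{2,\ell+1}=n-\lambda+\ell+1$, $m_{2,j}=n+\ell+2-j$ for $\ell+2\le j\le\lambda$, and $m_{2,j}=n+\ell+1-j$ for $\lambda+1\le j\le n$. If $\lambda>n$ (with $\lambda'=\lambda-n$): $m_{2,j}=\ell+2-j$ for $1\le j\le\lambda'$, $m_{2,j}=\ell+1-j$ for $\lambda'+1\le j\le\ell$, $m_{2,\ell+1}=\ell-\lambda'+1$, and $m_{2,j}=n+\ell+2-j$ for $\ell+2\le j\le n$. *)

theory Defs
  imports "HOL-Combinatorics.Combinatorics"
begin

text \<open>Rows and columns are 1-indexed: a k x n matrix is a function nat => nat => real,
  only entries with row in {1..k} and column in {1..n} matter.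
  Its r-th smallest element (r = 1..k) is i_r.\<close>

definition kth_elem :: "nat set \<Rightarrow> nat \<Rightarrow> nat" where
  "kth_elem I r = sorted_list_of_set I ! (r - 1)"

definition ksubset :: "nat \<Rightarrow> nat \<Rightarrow> nat set \<Rightarrow> bool" where
  "ksubset k n I \<longleftrightarrow> I \<subseteq> {1..n} \<and> card I = k"

definition matching_field :: "nat \<Rightarrow> nat \<Rightarrow> (nat set \<Rightarrow> nat \<Rightarrow> nat) \<Rightarrow> bool" where
  "matching_field k n \<Lambda> \<longleftrightarrow> (\<forall>I. ksubset k n I \<longrightarrow> \<Lambda> I permutes {1..k})"

text \<open>Weight of the term sgn(tau) x_{tau(1) i_1} ... x_{tau(k) i_k} of det X_I.\<close>
definition term_weight :: "(nat \<Rightarrow> nat \<Rightarrow> real) \<Rightarrow> nat \<Rightarrow> nat set \<Rightarrow> (nat \<Rightarrow> nat) \<Rightarrow> real" where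
  "term_weight M k I \<tau> = (\<Sum>r = 1..k. M (\<tau> r) (kth_elem I r))"

definition induces :: "nat \<Rightarrow> nat \<Rightarrow> (nat \<Rightarrow> nat \<Rightarrow> real) \<Rightarrow> (nat set \<Rightarrow> nat \<Rightarrow> nat) \<Rightarrow> bool" where
  "induces k n M \<Lambda> \<longleftrightarrow> (\<forall>I. ksubset k n I \<longrightarrow>
      \<Lambda> I permutes {1..k} \<and>
      (\<forall>\<tau>. \<tau> permutes {1..k} \<and> \<tau> \<noteq> \<Lambda> I \<longrightarrow> term_weight M k I (\<Lambda> I) < term_weight M k I \<tau>))"

definition coherent :: "nat \<Rightarrow> nat \<Rightarrow> (nat set \<Rightarrow> nat \<Rightarrow> nat) \<Rightarrow> bool" where
  "coherent k n \<Lambda> \<longleftrightarrow> matching_field k n \<Lambda> \<and> (\<exists>M. induces k n M \<Lambda>)"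

definition B_field :: "nat \<Rightarrow> nat \<Rightarrow> nat \<Rightarrow> nat set \<Rightarrow> nat \<Rightarrow> nat" where
  "B_field n l lam I =
     (let p = kth_elem I 1; q = kth_elem I 2 in
      if lam < n then
        (if q \<le> l \<or> (p = l + 1 \<and> l + 1 < lam \<and> lam < q) \<or> l + 1 < p
         then id else Transposition.transpose 1 2)
      else
        (let lam' = lam - n in
         if q \<le> l \<or> (p \<le> lam' \<and> lam' < q \<and> q = l + 1) \<or> l + 1 < p
         then id else Transposition.transpose 1 2))"

definition M_int :: "nat \<Rightarrow> nat \<Rightarrow> nat \<Rightarrow> nat \<Rightarrow> nat \<Rightarrow> int" where
  "M_int n l lam i j =
     (let N = int n + 1; jj = int j; nn = int n; ll = int l; lm = int lam in
      if i = 1 then 0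
      else if 3 \<le> i then N ^ (i - 2) * (nn + 1 - jj)
      else if i = 2 then
        (if lam < n then
           (if 1 \<le> j \<and> j \<le> l then ll + 1 - jj
            else if j = l + 1 then nn - lm + ll + 1
            else if l + 2 \<le> j \<and> j \<le> lam then nn + ll + 2 - jj
            else nn + ll + 1 - jj)
         else
           (let lm' = int (lam - n) in
            if 1 \<le> j \<and> j \<le> lam - n then ll + 2 - jj
            else if lam - n + 1 \<le> j \<and> j \<le> l then ll + 1 - jj
            else if j = l + 1 then ll - lm' + 1
            else nn + ll + 2 - jj))
      else 0)"

definition M_mat :: "nat \<Rightarrow> nat \<Rightarrow> nat \<Rightarrow> nat \<Rightarrow> nat \<Rightarrow> real" where
  "M_mat n l lam i j = real_of_int (M_int n l lam i j)"

end

theory Submission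
  imports Defs
begin

lemma key_perm:
  fixes F :: "nat \<Rightarrow> nat \<Rightarrow> real"
  assumes fin: "finite S" and sp: "\<sigma> permutes S" and tp: "\<tau> permutes S" and ne: "\<tau> \<noteq> \<sigma>"
    and inv: "\<And>i. \<sigma> (\<sigma> i) = i"
    and opt: "\<And>i r. i \<in> S \<Longrightarrow> r \<in> S \<Longrightarrow> r \<noteq> \<sigma> i \<Longrightarrow> F i (\<sigma> i) < F i r"
  shows "(\<Sum>r\<in>S. F (\<sigma> r) r) < (\<Sum>r\<in>S. F (\<tau> r) r)"
proof -
  have bt: "bij_betw \<tau> S S" using tp by (rule permutes_imp_bij)
  have bs: "bij_betw \<sigma> S S" using sp by (rule permutes_imp_bij)
  have e1: "(\<Sum>r\<in>S. F (\<tau> r) r) = (\<Sum>i\<in>S. F i (inv \<tau> i))"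
  proof -
    have "(\<Sum>i\<in>S. F i (inv \<tau> i)) = (\<Sum>r\<in>S. F (\<tau> r) (inv \<tau> (\<tau> r)))"
      using sum.reindex_bij_betw[OF bt, of "\<lambda>i. F i (inv \<tau> i)"] by simp
    also have "\<dots> = (\<Sum>r\<in>S. F (\<tau> r) r)"
      using permutes_inverses(2)[OF tp] by simp
    finally show ?thesis by simp
  qed
  have e2: "(\<Sum>r\<in>S. F (\<sigma> r) r) = (\<Sum>i\<in>S. F i (\<sigma> i))"
  proof -
    have "(\<Sum>i\<in>S. F i (\<sigma> i)) = (\<Sum>r\<in>S. F (\<sigma> r) (\<sigma> (\<sigma> r)))"
      using sum.reindex_bij_betw[OF bs, of "\<lambda>i. F i (\<sigma> i)"] by simp
    also have "\<dots> = (\<Sum>r\<in>S. F (\<sigma> r) r)" using inv by simp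
    finally show ?thesis by simp
  qed
  have ex: "\<exists>i\<in>S. inv \<tau> i \<noteq> \<sigma> i"
  proof (rule ccontr)
    assume "\<not> ?thesis"
    hence h: "\<And>i. i \<in> S \<Longrightarrow> inv \<tau> i = \<sigma> i" by blast
    have "\<tau> = \<sigma>"
    proof
      fix r show "\<tau> r = \<sigma> r"
      proof (cases "r \<in> S")
        case True
        hence "\<tau> r \<in> S" using tp by (simp add: permutes_in_image)
        hence "inv \<tau> (\<tau> r) = \<sigma> (\<tau> r)" using h by blast
        hence "r = \<sigma> (\<tau> r)" using permutes_inverses(2)[OF tp] by simp
        hence "\<sigma> r = \<tau> r" using inv by metis
        thus ?thesis by simp
      next
        case False thus ?thesis using tp sp by (simp add: permutes_not_in)
      qed
    qed
    with ne show False by simp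
  qed
  have "(\<Sum>i\<in>S. F i (\<sigma> i)) < (\<Sum>i\<in>S. F i (inv \<tau> i))"
  proof (rule sum_strict_mono_ex1[OF fin])
    show "\<forall>i\<in>S. F i (\<sigma> i) \<le> F i (inv \<tau> i)"
    proof
      fix i assume i: "i \<in> S"
      have "inv \<tau> i \<in> S" using i permutes_inv[OF tp] by (simp add: permutes_in_image)
      thus "F i (\<sigma> i) \<le> F i (inv \<tau> i)" using opt[OF i] by (cases "inv \<tau> i = \<sigma> i") force+
    qed
    show "\<exists>i\<in>S. F i (\<sigma> i) < F i (inv \<tau> i)"
    proof -
      obtain i where i: "i \<in> S" "inv \<tau> i \<noteq> \<sigma> i" using ex by blast
      have "inv \<tau> i \<in> S" using i permutes_inv[OF tp] by (simp add: permutes_in_image)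
      thus ?thesis using opt[OF i(1)] i by blast
    qed
  qed
  thus ?thesis using e1 e2 by simp
qed

lemma M2_slope:
  assumes "1 \<le> j" "j < j'" "j' \<le> n" "l + 2 \<le> lam" "lam \<le> n + l - 1" "lam \<noteq> n"
  shows "M_int n l lam 2 j - M_int n l lam 2 j' \<le> 2 * (int j' - int j)"
  using assms unfolding M_int_def Let_def by (auto split: if_splits)

lemma M2_B:
  assumes "1 \<le> p" "p < q" "q \<le> n" "l + 2 \<le> lam" "lam \<le> n + l - 1" "lam \<noteq> n"
  shows "M_int n l lam 2 p \<noteq> M_int n l lam 2 q"
    and "(if lam < n then
        (q \<le> l \<or> (p = l + 1 \<and> l + 1 < lam \<and> lam < q) \<or> l + 1 < p)
      else (q \<le> l \<or> (p \<le> lam - n \<and> lam - n < q \<and> q = l + 1) \<or> l + 1 < p))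
     \<longleftrightarrow> M_int n l lam 2 q < M_int n l lam 2 p"
  using assms unfolding M_int_def Let_def by (auto split: if_splits)

lemma telesc_gt:
  fixes x t :: "nat \<Rightarrow> real"
  assumes "r < r'" "\<And>s. r \<le> s \<Longrightarrow> s < r' \<Longrightarrow> x s < x (Suc s)"
    "\<And>s. r \<le> s \<Longrightarrow> s < r' \<Longrightarrow> C < t s"
  shows "C * (x r' - x r) < (\<Sum>s = r..<r'. t s * (x (Suc s) - x s))"
proof -
  have "(\<Sum>s = r..<r'. x (Suc s) - x s) = x r' - x r" using assms(1) by (intro sum_Suc_diff') simp
  hence "C * (x r' - x r) = (\<Sum>s = r..<r'. C * (x (Suc s) - x s))" by (metis sum_distrib_left)
  also have "\<dots> < (\<Sum>s = r..<r'. t s * (x (Suc s) - x s))"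
  proof (rule sum_strict_mono)
    fix s assume "s \<in> {r..<r'}"
    thus "C * (x (Suc s) - x s) < t s * (x (Suc s) - x s)" using assms(2,3)[of s] by simp
  qed (use assms(1) in auto)
  finally show ?thesis .
qed

lemma telesc_lt:
  fixes x t :: "nat \<Rightarrow> real"
  assumes "r < r'" "\<And>s. r \<le> s \<Longrightarrow> s < r' \<Longrightarrow> x s < x (Suc s)"
    "\<And>s. r \<le> s \<Longrightarrow> s < r' \<Longrightarrow> t s < C"
  shows "(\<Sum>s = r..<r'. t s * (x (Suc s) - x s)) < C * (x r' - x r)"
proof -
  have "(-C) * (x r' - x r) < (\<Sum>s = r..<r'. (- t s) * (x (Suc s) - x s))"
    using assms by (intro telesc_gt) auto
  thus ?thesis by (simp add: sum_negf)
qed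


lemma kth_facts:
  assumes "ksubset k n I"
  shows "\<And>r. 1 \<le> r \<Longrightarrow> r \<le> k \<Longrightarrow> 1 \<le> kth_elem I r \<and> kth_elem I r \<le> n"
    and "\<And>r r'. 1 \<le> r \<Longrightarrow> r < r' \<Longrightarrow> r' \<le> k \<Longrightarrow> kth_elem I r < kth_elem I r'"
proof -
  have sub: "I \<subseteq> {1..n}" and cI: "card I = k" using assms unfolding ksubset_def by auto
  have fin: "finite I" using sub finite_subset by blast
  let ?L = "sorted_list_of_set I"
  have len: "length ?L = k" using cI by simp
  have st: "sorted_wrt (<) ?L" by simp
  have setL: "set ?L = I" using fin by simp
  show "1 \<le> kth_elem I r \<and> kth_elem I r \<le> n" if "1 \<le> r" "r \<le> k" for r
  proof -
    have "?L ! (r - 1) \<in> set ?L" using that len by (intro nth_mem) simp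
    thus ?thesis using setL sub unfolding kth_elem_def by auto
  qed
  show "kth_elem I r < kth_elem I r'" if "1 \<le> r" "r < r'" "r' \<le> k" for r r'
    unfolding kth_elem_def using sorted_wrt_nth_less[OF st, of "r - 1" "r' - 1"] that len by simp
qed

lemma main_I:
  fixes k n l lam :: nat
  assumes k2: "2 \<le> k" and kn: "k \<le> n"
    and a4: "l + 2 \<le> lam" and a5: "lam \<le> n + l - 1" and a6: "lam \<noteq> n"
    and I: "ksubset k n I"
    and tp: "\<tau> permutes {1..k}" and ne: "\<tau> \<noteq> B_field n l lam I"
  shows "term_weight (M_mat n l lam) k I (B_field n l lam I) < term_weight (M_mat n l lam) k I \<tau>"
proof -
  define x where "x r = kth_elem I r" for r
  define xr where "xr r = real (x r)" for r
  have xb: "\<And>r. 1 \<le> r \<Longrightarrow> r \<le> k \<Longrightarrow> 1 \<le> x r \<and> x r \<le> n"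
    using kth_facts(1)[OF I] unfolding x_def by blast
  have xm: "\<And>r r'. 1 \<le> r \<Longrightarrow> r < r' \<Longrightarrow> r' \<le> k \<Longrightarrow> x r < x r'"
    using kth_facts(2)[OF I] unfolding x_def by blast
  define N :: real where "N = real n + 1"
  define b where "b r = real_of_int (M_int n l lam 2 (x r))" for r
  define t :: "nat \<Rightarrow> real" where "t s = (if s = 2 then 3 else 2 * N ^ (s - 2))" for s
  define V where "V r = (\<Sum>s = 2..<r. t s * (xr (Suc s) - xr s))" for r
  define v where "v r = (if r = 1 then (b 1 - b 2) / 2 else - V r)" for r
  define F where "F i r = M_mat n l lam i (x r) - v r" for i r
  define \<sigma> where "\<sigma> = B_field n l lam I"
  have x12: "x 1 < x 2" using xm[of 1 2] k2 by simp
  have x1b: "1 \<le> x 1" and x2b: "x 2 \<le> n" using xb[of 1] xb[of 2] k2 by auto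
  have bne: "b 1 \<noteq> b 2" using M2_B(1)[OF x1b x12 x2b a4 a5 a6] unfolding b_def by simp
  have sig0: "\<sigma> = (if (if lam < n then
        (x 2 \<le> l \<or> (x 1 = l + 1 \<and> l + 1 < lam \<and> lam < x 2) \<or> l + 1 < x 1)
      else (x 2 \<le> l \<or> (x 1 \<le> lam - n \<and> lam - n < x 2 \<and> x 2 = l + 1) \<or> l + 1 < x 1))
      then id else Transposition.transpose 1 2)"
    unfolding \<sigma>_def B_field_def Let_def x_def by (cases "lam < n") auto
  have bb: "(b 2 < b 1) = (M_int n l lam 2 (x 2) < M_int n l lam 2 (x 1))" unfolding b_def by simp
  have sig: "\<sigma> = (if b 2 < b 1 then id else Transposition.transpose 1 2)"
    by (simp only: sig0 M2_B(2)[OF x1b x12 x2b a4 a5 a6] bb)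
  have slope: "b 2 - b r \<le> 2 * (xr r - xr 2)" if "2 < r" "r \<le> k" for r
  proof -
    have "x 2 < x r" "x r \<le> n" "1 \<le> x 2" using xm[of 2 r] xb[of r] xb[of 2] that by auto
    from M2_slope[OF this(3) this(1) this(2) a4 a5 a6] show ?thesis
      unfolding b_def xr_def by simp
  qed
  have slope12: "b 1 - b 2 \<le> 2 * (xr 2 - xr 1)"
    using M2_slope[OF x1b x12 x2b a4 a5 a6] unfolding b_def xr_def by simp
  have xinc: "\<And>s. 2 \<le> s \<Longrightarrow> s < r' \<Longrightarrow> r' \<le> k \<Longrightarrow> xr s < xr (Suc s)" for r'
    using xm unfolding xr_def by simp
  have V2: "V 2 = 0" unfolding V_def by simp
  have VD: "V r' - V r = (\<Sum>s = r..<r'. t s * (xr (Suc s) - xr s))" if "2 \<le> r" "r \<le> r'" for r r'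
    unfolding V_def using sum.atLeastLessThan_concat[of 2 r r' "\<lambda>s. t s * (xr (Suc s) - xr s)"] that
    by simp
  have Npos: "N \<ge> 3" unfolding N_def using k2 kn by simp
  have tgt: "t s > 2" if "2 \<le> s" for s
  proof (cases "s = 2")
    case False
    hence "N ^ (s - 2) \<ge> N ^ 1" using that Npos by (intro power_increasing) auto
    thus ?thesis using False Npos unfolding t_def by simp
  qed (simp add: t_def)
  have Vgt: "V r > 2 * (xr r - xr 2)" if "2 < r" "r \<le> k" for r
    using telesc_gt[of 2 r xr 2 t] VD[of 2 r] V2 tgt xinc[of _ k] that by auto
  have Vpos: "V r > 0" if "2 < r" "r \<le> k" for r
    using Vgt[OF that] xm[of 2 r] that unfolding xr_def by simp
  have Mrow: "M_mat n l lam i j = N ^ (i - 2) * (real n + 1 - real j)" if "3 \<le> i" for i j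
    using that unfolding M_mat_def M_int_def N_def Let_def by simp
  have Mrow1: "M_mat n l lam 1 j = 0" for j unfolding M_mat_def M_int_def by simp
  have Mrow2: "M_mat n l lam 2 (x r) = b r" for r unfolding M_mat_def b_def by simp
  have opt: "F i (\<sigma> i) < F i r" if i: "i \<in> {1..k}" and r: "r \<in> {1..k}" and rne: "r \<noteq> \<sigma> i" for i r
  proof -
    have ik: "1 \<le> i" "i \<le> k" and rk: "1 \<le> r" "r \<le> k" using i r by auto
    have v2: "v 2 = 0" unfolding v_def using V2 by simp
    have vneg: "v r' < 0" if "3 \<le> r'" "r' \<le> k" for r' unfolding v_def using Vpos[of r'] that by simp
    have v1: "v 1 = (b 1 - b 2) / 2" unfolding v_def by simp
    consider "i = 1" | "i = 2" | "3 \<le> i" using ik by linarith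
    thus ?thesis
    proof cases
      case 1
      have Fe: "F 1 r' = - v r'" for r' unfolding F_def using Mrow1 by simp
      show ?thesis
      proof (cases "b 2 < b 1")
        case True
        hence s1: "\<sigma> 1 = 1" unfolding sig by simp
        have "r = 2 \<or> 3 \<le> r" using rne rk s1 1 by auto
        thus ?thesis using True s1 1 Fe v1 v2 vneg[of r] rk by auto
      next
        case False
        hence s1: "\<sigma> 1 = 2" unfolding sig by simp
        have "r = 1 \<or> 3 \<le> r" using rne rk s1 1 by auto
        thus ?thesis using False bne s1 1 Fe v1 v2 vneg[of r] rk by auto
      qed
    next
      case 2
      have Fe: "F 2 r' = b r' - v r'" for r' unfolding F_def using Mrow2 by simp
      have big: "b 2 < b r' - v r'" if "3 \<le> r'" "r' \<le> k" for r'
        using Vgt[of r'] slope[of r'] that unfolding v_def by simp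
      show ?thesis
      proof (cases "b 2 < b 1")
        case True
        hence s1: "\<sigma> 2 = 2" unfolding sig by simp
        have "r = 1 \<or> 3 \<le> r" using rne rk s1 2 by auto
        thus ?thesis using True s1 2 Fe v1 v2 big[of r] rk by auto
      next
        case False
        hence s1: "\<sigma> 2 = 1" unfolding sig by simp
        have "r = 2 \<or> 3 \<le> r" using rne rk s1 2 by auto
        thus ?thesis using False bne s1 2 Fe v1 v2 big[of r] rk by auto
      qed
    next
      case 3
      have si: "\<sigma> i = i" unfolding sig using 3 by (simp add: transpose_def)
      define c where "c = N ^ (i - 2)"
      have Fe: "F i r' = c * (real n + 1 - xr r') - v r'" for r'
        unfolding F_def c_def xr_def using Mrow[OF 3] by simp
      have N4: "N \<ge> 4" unfolding N_def using 3 ik kn by simp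
      have cge: "c \<ge> N" unfolding c_def using 3 N4 power_increasing[of 1 "i - 2" N] by simp
      have tbig: "t s > c" if "i \<le> s" for s
      proof -
        have "N ^ (s - 2) \<ge> c" unfolding c_def using that 3 N4 by (intro power_increasing) auto
        moreover have "c > 0" using cge N4 by simp
        ultimately show ?thesis unfolding t_def using that 3 by auto
      qed
      have tsmall: "t s < c" if "2 \<le> s" "s < i" for s
      proof (cases "s = 2")
        case True thus ?thesis unfolding t_def using cge N4 by simp
      next
        case False
        have "N ^ (s - 1) \<le> c" unfolding c_def using that N4 by (intro power_increasing) auto
        moreover have "N ^ (s - 1) = N * N ^ (s - 2)" using False that
          by (metis Suc_diff_Suc Suc_le_lessD numeral_2_eq_2 power_Suc diff_Suc_1 Suc_1)
        moreover have "N ^ (s - 2) > 0" using N4 by simp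
        moreover have "2 * N ^ (s - 2) < N * N ^ (s - 2)"
          using N4 \<open>N ^ (s - 2) > 0\<close> by (intro mult_strict_right_mono) auto
        ultimately have "2 * N ^ (s - 2) < c" by linarith
        thus ?thesis unfolding t_def using False by simp
      qed
      have low: "V i - V r' < c * (xr i - xr r')" if "2 \<le> r'" "r' < i" for r'
        using telesc_lt[of r' i xr t c] VD[of r' i] tsmall xinc[of _ k] that ik by auto
      have xr12: "xr 1 < xr 2" using x12 unfolding xr_def by simp
      consider "i < r" | "r = 1" | "2 \<le> r" "r < i" using rne si rk by linarith
      thus ?thesis
      proof cases
        case 1
        have "V r - V i > c * (xr r - xr i)"
          using telesc_gt[of i r xr c t] VD[of i r] tbig xinc[of _ k] 1 rk 3 by auto
        moreover have "v i = - V i" "v r = - V r" unfolding v_def using 1 3 by auto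
        ultimately show ?thesis using Fe[of i] Fe[of r] si by (simp add: algebra_simps)
      next
        case 2
        have "V i < c * (xr i - xr 2)" using low[of 2] V2 3 by simp
        moreover have "(b 1 - b 2) / 2 < c * (xr 2 - xr 1)"
        proof -
          have "(b 1 - b 2) / 2 \<le> xr 2 - xr 1" using slope12 by simp
          also have "\<dots> < c * (xr 2 - xr 1)" using xr12 cge N4 by simp
          finally show ?thesis .
        qed
        moreover have "v i = - V i" "v r = (b 1 - b 2) / 2" unfolding v_def using 2 3 by auto
        ultimately have h: "V i < c * xr i - c * xr 2" "(b 1 - b 2) / 2 < c * xr 2 - c * xr 1"
          "v i = - V i" "v r = (b 1 - b 2) / 2" by (simp_all add: right_diff_distrib)
        have "F i i = c * (real n + 1) - c * xr i + V i" using Fe[of i] h(3) by (simp add: right_diff_distrib)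
        moreover have "F i r = c * (real n + 1) - c * xr 1 - (b 1 - b 2) / 2"
          using Fe[of r] h(4) 2 by (simp add: right_diff_distrib)
        ultimately show ?thesis using h(1,2) unfolding si by linarith
      next
        case 3
        moreover have "v i = - V i" "v r = - V r" unfolding v_def using 3 \<open>3 \<le> i\<close> by auto
        ultimately show ?thesis using Fe[of i] Fe[of r] si low[of r] by (simp add: algebra_simps)
      qed
    qed
  qed
  have sp: "\<sigma> permutes {1..k}" unfolding sig using k2 by (auto intro: permutes_swap_id)
  have sinv: "\<And>i. \<sigma> (\<sigma> i) = i" unfolding sig by simp
  have "(\<Sum>r\<in>{1..k}. F (\<sigma> r) r) < (\<Sum>r\<in>{1..k}. F (\<tau> r) r)"
    by (rule key_perm[where F=F, OF _ sp tp _ sinv opt]) (use ne \<sigma>_def in auto)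
  hence "(\<Sum>r\<in>{1..k}. F (\<sigma> r) r) + (\<Sum>r\<in>{1..k}. v r) < (\<Sum>r\<in>{1..k}. F (\<tau> r) r) + (\<Sum>r\<in>{1..k}. v r)"
    by simp
  thus ?thesis unfolding term_weight_def F_def \<sigma>_def x_def sum.distrib[symmetric] by simp
qed

theorem proposition2p8:
  fixes k n l lam :: nat
  assumes "2 \<le> k" and "k \<le> n"
    and "l \<le> n - k + 1"
    and "l + 2 \<le> lam" and "lam \<le> n + l - 1" and "lam \<noteq> n"
  shows "induces k n (M_mat n l lam) (B_field n l lam) \<and> coherent k n (B_field n l lam)"
proof -
  have perm: "B_field n l lam I permutes {1..k}" for I
    unfolding B_field_def Let_def using assms(1) by (auto intro: permutes_swap_id)
  have ind: "induces k n (M_mat n l lam) (B_field n l lam)"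
    unfolding induces_def using perm main_I[OF assms(1,2,4,5,6)] by blast
  moreover have "coherent k n (B_field n l lam)"
    unfolding coherent_def matching_field_def using perm ind by blast
  ultimately show ?thesis by blast
qed

end
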